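(* For every $\varepsilon \in (0,1)$, $\ell, z \in \mathbb{N}$ and every time series $x\in \mathbb{R}^z$ there exists a time series $x' \in \mathbb{R}^{z'}$ with $z' \in O\big(2^{O(\ell/\epsilon)^{(2\ell+2)}}\big)$ such that for every $y\in \mathbb{R}^\ell$, \[ (1-\varepsilon)\, \mathbf{d}_{dF}(x,y) \le \mathbf{d}_{dF}(x',y) \le (1+\varepsilon)\, \mathbf{d}_{dF}(x,y). \]
   Context: For $x\in\mathbb{R}^z$ and $y\in\mathbb{R}^\ell$, the discrete Fréchet distance is $\mathbf{d}_{dF}(x,y)=\min_T\max_{(i,j)\in T}|x_i-y_j|$, where $T$ ranges over traversals: sequences of index pairs from $(1,1)$ to $(z,\ell)$ in which each step increases each index by $0$ or $1$ and at least one index by $1$. *)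

theory Defs
  imports Complex_Main
begin

text \<open>Time series are lists of reals; indices are 0-based.\<close>

definition traversal :: "nat \<Rightarrow> nat \<Rightarrow> (nat \<times> nat) list \<Rightarrow> bool" where
  "traversal z l T \<longleftrightarrow> T \<noteq> [] \<and> hd T = (0, 0) \<and> last T = (z - 1, l - 1) \<and>
     (\<forall>k. Suc k < length T \<longrightarrow>
        (fst (T ! Suc k) = fst (T ! k) \<or> fst (T ! Suc k) = Suc (fst (T ! k))) \<and>
        (snd (T ! Suc k) = snd (T ! k) \<or> snd (T ! Suc k) = Suc (snd (T ! k))) \<and>
        T ! Suc k \<noteq> T ! k)"

definition trav_cost :: "real list \<Rightarrow> real list \<Rightarrow> (nat \<times> nat) list \<Rightarrow> real" where
  "trav_cost x y T = Max ((\<lambda>(i, j). \<bar>x ! i - y ! j\<bar>) ` set T)"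

definition dF :: "real list \<Rightarrow> real list \<Rightarrow> real" where
  "dF x y = Min (trav_cost x y ` {T. traversal (length x) (length y) T})"

end

theory Submission
  imports Defs
begin


inductive reach :: "(nat \<Rightarrow> nat \<Rightarrow> bool) \<Rightarrow> nat \<Rightarrow> nat \<Rightarrow> bool" for P where
  R0: "P 0 0 \<Longrightarrow> reach P 0 0"
| Ri: "reach P i j \<Longrightarrow> P (Suc i) j \<Longrightarrow> reach P (Suc i) j"
| Rj: "reach P i j \<Longrightarrow> P i (Suc j) \<Longrightarrow> reach P i (Suc j)"
| Rd: "reach P i j \<Longrightarrow> P (Suc i) (Suc j) \<Longrightarrow> reach P (Suc i) (Suc j)"

definition stepok :: "nat \<times> nat \<Rightarrow> nat \<times> nat \<Rightarrow> bool" where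
  "stepok p q \<longleftrightarrow> (fst q = fst p \<or> fst q = Suc (fst p)) \<and>
        (snd q = snd p \<or> snd q = Suc (snd p)) \<and> q \<noteq> p"

definition steps :: "(nat \<times> nat) list \<Rightarrow> bool" where
  "steps T \<longleftrightarrow> (\<forall>k. Suc k < length T \<longrightarrow> stepok (T ! k) (T ! Suc k))"

lemma traversal_alt: "traversal z l T \<longleftrightarrow> T \<noteq> [] \<and> hd T = (0,0) \<and> last T = (z-1,l-1) \<and> steps T"
  unfolding traversal_def steps_def stepok_def by blast

lemma reach_P: "reach P i j \<Longrightarrow> P i j"
  by (induction rule: reach.induct) auto

lemma reach_mono:
  assumes "reach P i j" "\<And>a b. a \<le> i \<Longrightarrow> b \<le> j \<Longrightarrow> P a b \<Longrightarrow> P' a b"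
  shows "reach P' i j"
  using assms
proof (induction rule: reach.induct)
  case (R0) then show ?case by (auto intro: reach.R0)
next
  case (Ri i j) then show ?case by (auto intro!: reach.Ri)
next
  case (Rj i j) then show ?case by (auto intro!: reach.Rj)
next
  case (Rd i j) then show ?case by (auto intro!: reach.Rd)
qed

lemma reach_cover: "reach P i j \<Longrightarrow> i' \<le> i \<Longrightarrow> \<exists>j'\<le>j. P i' j'"
proof (induction arbitrary: i' rule: reach.induct)
  case R0 then show ?case by auto
next
  case (Ri i j) then show ?case by (cases "i' = Suc i") auto
next
  case (Rj i j) then show ?case by (meson le_Suc_eq)
next
  case (Rd i j) then show ?case by (cases "i' = Suc i") (auto, meson le_Suc_eq le_SucI)
qed

lemma reach_cover2: "reach P i j \<Longrightarrow> j' \<le> j \<Longrightarrow> \<exists>i'\<le>i. P i' j'"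
proof (induction arbitrary: j' rule: reach.induct)
  case R0 then show ?case by auto
next
  case (Ri i j) then show ?case by (meson le_Suc_eq)
next
  case (Rj i j) then show ?case by (cases "j' = Suc j") auto
next
  case (Rd i j) then show ?case by (cases "j' = Suc j") (auto, meson le_Suc_eq le_SucI)
qed

lemma reach_Suc_i:
  "reach P (Suc i) j \<longleftrightarrow> P (Suc i) j \<and> (reach P i j \<or> (j > 0 \<and> (reach P (Suc i) (j-1) \<or> reach P i (j-1))))"
proof
  assume "reach P (Suc i) j"
  then show "P (Suc i) j \<and> (reach P i j \<or> (j > 0 \<and> (reach P (Suc i) (j-1) \<or> reach P i (j-1))))"
    by (cases rule: reach.cases) auto
next
  assume h: "P (Suc i) j \<and> (reach P i j \<or> (j > 0 \<and> (reach P (Suc i) (j-1) \<or> reach P i (j-1))))"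
  show "reach P (Suc i) j"
  proof (cases j)
    case 0 then show ?thesis using h by (auto intro: reach.Ri)
  next
    case (Suc j') then show ?thesis using h by (auto intro: reach.intros)
  qed
qed

lemma reach_from_trav:
  assumes "traversal z l T" "\<forall>p\<in>set T. P (fst p) (snd p)"
  shows "reach P (z-1) (l-1)"
proof -
  have ne: "T \<noteq> []" and hd: "hd T = (0,0)" and la: "last T = (z-1,l-1)" and st: "steps T"
    using assms(1) by (auto simp: traversal_alt)
  have "\<forall>k. k < length T \<longrightarrow> reach P (fst (T!k)) (snd (T!k))"
  proof (intro allI)
    fix k show "k < length T \<longrightarrow> reach P (fst (T!k)) (snd (T!k))"
    proof (induction k)
      case 0
      have "T!0 = (0,0)" using ne hd by (simp add: hd_conv_nth)
      moreover have "T!0 \<in> set T" using ne by simp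
      ultimately have "P 0 0" using assms(2) by force
      then show ?case using \<open>T!0 = (0,0)\<close> by (auto intro: reach.R0)
    next
      case (Suc k)
      show ?case
      proof
        assume k: "Suc k < length T"
        then have IH: "reach P (fst (T!k)) (snd (T!k))" using Suc by simp
        have s: "stepok (T!k) (T!Suc k)" using st k by (simp add: steps_def)
        have p: "P (fst (T!Suc k)) (snd (T!Suc k))" using assms(2) k nth_mem by blast
        obtain a b where ab: "T!k = (a,b)" by fastforce
        obtain a' b' where ab': "T!Suc k = (a',b')" by fastforce
        from s ab ab' have "(a' = a \<or> a' = Suc a) \<and> (b' = b \<or> b' = Suc b) \<and> (a',b') \<noteq> (a,b)"
          by (simp add: stepok_def)
        then show "reach P (fst (T!Suc k)) (snd (T!Suc k))"
          using IH p ab ab' by (auto intro: reach.intros)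
      qed
    qed
  qed
  then have "reach P (fst (T!(length T - 1))) (snd (T!(length T - 1)))" using ne by simp
  then show ?thesis using la ne by (simp add: last_conv_nth)
qed

lemma steps_snoc:
  assumes "T \<noteq> []" "steps T" "stepok (last T) p"
  shows "steps (T @ [p])"
  unfolding steps_def
proof (intro allI impI)
  fix k assume k: "Suc k < length (T @ [p])"
  show "stepok ((T @ [p]) ! k) ((T @ [p]) ! Suc k)"
  proof (cases "Suc k < length T")
    case True then show ?thesis using assms(2) by (simp add: nth_append steps_def)
  next
    case False
    then have "k = length T - 1" using k by simp
    then show ?thesis using assms False k by (simp add: nth_append last_conv_nth)
  qed
qed

lemma trav_from_reach:
  "reach P i j \<Longrightarrow> \<exists>T. T \<noteq> [] \<and> hd T = (0,0) \<and> last T = (i,j) \<and> steps T \<and> (\<forall>p\<in>set T. P (fst p) (snd p))"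
proof (induction rule: reach.induct)
  case R0
  show ?case by (rule exI[of _ "[(0,0)]"]) (auto simp: steps_def R0)
next
  case (Ri i j)
  then obtain T where T: "T \<noteq> [] \<and> hd T = (0,0) \<and> last T = (i,j) \<and> steps T \<and> (\<forall>p\<in>set T. P (fst p) (snd p))" by blast
  show ?case
    by (rule exI[of _ "T @ [(Suc i, j)]"]) (use T Ri in \<open>auto intro!: steps_snoc simp: stepok_def\<close>)
next
  case (Rj i j)
  then obtain T where T: "T \<noteq> [] \<and> hd T = (0,0) \<and> last T = (i,j) \<and> steps T \<and> (\<forall>p\<in>set T. P (fst p) (snd p))" by blast
  show ?case
    by (rule exI[of _ "T @ [(i, Suc j)]"]) (use T Rj in \<open>auto intro!: steps_snoc simp: stepok_def\<close>)
next
  case (Rd i j)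
  then obtain T where T: "T \<noteq> [] \<and> hd T = (0,0) \<and> last T = (i,j) \<and> steps T \<and> (\<forall>p\<in>set T. P (fst p) (snd p))" by blast
  show ?case
    by (rule exI[of _ "T @ [(Suc i, Suc j)]"]) (use T Rd in \<open>auto intro!: steps_snoc simp: stepok_def\<close>)
qed

lemma steps_mono:
  assumes "steps T" "k' < length T" "k \<le> k'"
  shows "fst (T!k) \<le> fst (T!k') \<and> snd (T!k) \<le> snd (T!k') \<and> fst (T!k) + snd (T!k) + (k' - k) \<le> fst (T!k') + snd (T!k')"
  using assms(2,3)
proof (induction k')
  case 0 then show ?case by simp
next
  case (Suc k')
  show ?case
  proof (cases "k = Suc k'")
    case True then show ?thesis by simp
  next
    case False
    then have IH: "fst (T!k) \<le> fst (T!k') \<and> snd (T!k) \<le> snd (T!k') \<and> fst (T!k) + snd (T!k) + (k' - k) \<le> fst (T!k') + snd (T!k')"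
      using Suc by simp
    have "stepok (T!k') (T!Suc k')" using assms(1) Suc(2) by (simp add: steps_def)
    then have "fst (T!k') \<le> fst (T!Suc k') \<and> snd (T!k') \<le> snd (T!Suc k') \<and> fst (T!k') + snd (T!k') + 1 \<le> fst (T!Suc k') + snd (T!Suc k')"
      unfolding stepok_def by (auto simp: prod_eq_iff)
    then show ?thesis using IH False Suc(3) by auto
  qed
qed

lemma trav_bounds:
  assumes "traversal z l T" "z \<ge> 1" "l \<ge> 1"
  shows "set T \<subseteq> {..<z} \<times> {..<l} \<and> length T \<le> z + l"
proof -
  have ne: "T \<noteq> []" and hd: "hd T = (0,0)" and la: "last T = (z-1,l-1)" and st: "steps T"
    using assms(1) by (auto simp: traversal_alt)
  have lastn: "T!(length T - 1) = (z-1,l-1)" using la ne by (simp add: last_conv_nth)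
  have h0: "T!0 = (0,0)" using ne hd by (simp add: hd_conv_nth)
  have "set T \<subseteq> {..<z} \<times> {..<l}"
  proof
    fix p assume "p \<in> set T"
    then obtain k where k: "k < length T" "p = T!k" by (auto simp: in_set_conv_nth)
    have "fst (T!k) \<le> fst (T!(length T - 1)) \<and> snd (T!k) \<le> snd (T!(length T - 1))"
      using steps_mono[OF st, of "length T - 1" k] k ne by auto
    then show "p \<in> {..<z} \<times> {..<l}" using k lastn assms(2,3) by (auto simp: mem_Times_iff)
  qed
  moreover have "length T - 1 \<le> (z-1) + (l-1)"
    using steps_mono[OF st, of "length T - 1" 0] ne h0 lastn by auto
  ultimately show ?thesis using assms by auto
qed

lemma finite_travs: "z \<ge> 1 \<Longrightarrow> l \<ge> 1 \<Longrightarrow> finite {T. traversal z l T}"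
  by (rule finite_subset[OF _ finite_lists_length_le[of "{..<z} \<times> {..<l}" "z + l"]])
     (use trav_bounds in auto)

lemma reach_True: "reach (\<lambda>_ _. True) i j"
proof (induction i)
  case 0 show ?case by (induction j) (auto intro: reach.intros)
next
  case (Suc i) show ?case using Suc by (induction j) (auto intro: reach.intros)
qed

lemma trav_exists: "\<exists>T. traversal z l T"
  using trav_from_reach[OF reach_True[of "z-1" "l-1"]] by (auto simp: traversal_alt)

lemma dF_le_iff:
  assumes "x \<noteq> []" "y \<noteq> []"
  shows "dF x y \<le> r \<longleftrightarrow> reach (\<lambda>i j. \<bar>x!i - y!j\<bar> \<le> r) (length x - 1) (length y - 1)"
proof -
  let ?TS = "{T. traversal (length x) (length y) T}"
  have fin: "finite ?TS" using assms by (intro finite_travs) (auto simp: Suc_le_eq)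
  have ne: "?TS \<noteq> {}" using trav_exists by auto
  have cost: "trav_cost x y T \<le> r \<longleftrightarrow> (\<forall>p\<in>set T. \<bar>x!fst p - y!snd p\<bar> \<le> r)" if "T \<noteq> []" for T
    using that unfolding trav_cost_def by (subst Max_le_iff) auto
  show ?thesis
  proof
    assume "dF x y \<le> r"
    moreover have "dF x y \<in> trav_cost x y ` ?TS" unfolding dF_def using fin ne by (intro Min_in) auto
    ultimately obtain T where T: "traversal (length x) (length y) T" "trav_cost x y T \<le> r" by auto
    then have "T \<noteq> []" by (simp add: traversal_alt)
    then show "reach (\<lambda>i j. \<bar>x!i - y!j\<bar> \<le> r) (length x - 1) (length y - 1)"
      using reach_from_trav[OF T(1)] cost T(2) by auto
  next
    assume "reach (\<lambda>i j. \<bar>x!i - y!j\<bar> \<le> r) (length x - 1) (length y - 1)"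
    from trav_from_reach[OF this] obtain T where T: "T \<noteq> []" "hd T = (0,0)"
      "last T = (length x - 1, length y - 1)" "steps T" "\<forall>p\<in>set T. \<bar>x!fst p - y!snd p\<bar> \<le> r" by blast
    then have tr: "T \<in> ?TS" by (simp add: traversal_alt)
    have "dF x y \<le> trav_cost x y T" unfolding dF_def using fin tr by (intro Min_le) auto
    also have "\<dots> \<le> r" using cost T by auto
    finally show "dF x y \<le> r" .
  qed
qed

lemma dF_nonneg: "x \<noteq> [] \<Longrightarrow> y \<noteq> [] \<Longrightarrow> 0 \<le> dF x y"
  using reach_P dF_le_iff[of x y "dF x y"] by force




definition Qs :: "'a set set \<Rightarrow> nat \<Rightarrow> 'a set list set" where
  "Qs F l = {Q. set Q \<subseteq> F \<and> length Q = l}"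

definition st :: "'a set set \<Rightarrow> nat \<Rightarrow> 'a list \<Rightarrow> (nat \<times> 'a set list) set" where
  "st F l u = {(j,Q). j < l \<and> Q \<in> Qs F l \<and> reach (\<lambda>a b. u!a \<in> Q!b) (length u - 1) j}"

lemma reach_prefix:
  assumes "u \<noteq> []"
  shows "reach (\<lambda>a b. (u@w)!a \<in> Q!b) (length u - 1) j \<longleftrightarrow> reach (\<lambda>a b. u!a \<in> Q!b) (length u - 1) j"
proof -
  have "\<And>a b. a \<le> length u - 1 \<Longrightarrow> (u@w)!a = u!a" using assms
    by (intro nth_append_left) (simp add: less_eq_iff_succ_less)
  then show ?thesis by (metis (no_types, lifting) reach_mono)
qed

lemma st_snoc:
  assumes "u \<noteq> []" "u' \<noteq> []" "st F l u = st F l u'"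
  shows "st F l (u@[c]) = st F l (u'@[c])"
proof -
  have key: "reach (\<lambda>a b. (u@[c])!a \<in> Q!b) (length u) j \<longleftrightarrow> reach (\<lambda>a b. (u'@[c])!a \<in> Q!b) (length u') j"
    if "j < l" "Q \<in> Qs F l" for j Q
    using that
  proof (induction j)
    case 0
    have e: "reach (\<lambda>a b. u!a \<in> Q!b) (length u - 1) 0 \<longleftrightarrow> reach (\<lambda>a b. u'!a \<in> Q!b) (length u' - 1) 0"
      using assms(3) 0 unfolding st_def by (auto simp: set_eq_iff)
    have "reach (\<lambda>a b. (u@[c])!a \<in> Q!b) (length u) 0 \<longleftrightarrow> c \<in> Q!0 \<and> reach (\<lambda>a b. u!a \<in> Q!b) (length u - 1) 0"
      using reach_Suc_i[of "\<lambda>a b. (u@[c])!a \<in> Q!b" "length u - 1" 0] reach_prefix[OF assms(1), of "[c]" Q 0] assms(1)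
      by simp
    moreover have "reach (\<lambda>a b. (u'@[c])!a \<in> Q!b) (length u') 0 \<longleftrightarrow> c \<in> Q!0 \<and> reach (\<lambda>a b. u'!a \<in> Q!b) (length u' - 1) 0"
      using reach_Suc_i[of "\<lambda>a b. (u'@[c])!a \<in> Q!b" "length u' - 1" 0] reach_prefix[OF assms(2), of "[c]" Q 0] assms(2)
      by simp
    ultimately show ?case using e by simp
  next
    case (Suc j)
    have IH: "reach (\<lambda>a b. (u@[c])!a \<in> Q!b) (length u) j \<longleftrightarrow> reach (\<lambda>a b. (u'@[c])!a \<in> Q!b) (length u') j"
      using Suc by simp
    have e: "reach (\<lambda>a b. u!a \<in> Q!b) (length u - 1) j' \<longleftrightarrow> reach (\<lambda>a b. u'!a \<in> Q!b) (length u' - 1) j'"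
      if "j' < l" for j'
      using assms(3) Suc that unfolding st_def by (auto simp: set_eq_iff)
    have "reach (\<lambda>a b. (u@[c])!a \<in> Q!b) (length u) (Suc j) \<longleftrightarrow> c \<in> Q!Suc j \<and>
        (reach (\<lambda>a b. u!a \<in> Q!b) (length u - 1) (Suc j) \<or> reach (\<lambda>a b. (u@[c])!a \<in> Q!b) (length u) j
          \<or> reach (\<lambda>a b. u!a \<in> Q!b) (length u - 1) j)"
      using reach_Suc_i[of "\<lambda>a b. (u@[c])!a \<in> Q!b" "length u - 1" "Suc j"]
        reach_prefix[OF assms(1), of "[c]" Q "Suc j"] reach_prefix[OF assms(1), of "[c]" Q j] assms(1)
      by simp
    moreover have "reach (\<lambda>a b. (u'@[c])!a \<in> Q!b) (length u') (Suc j) \<longleftrightarrow> c \<in> Q!Suc j \<and>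
        (reach (\<lambda>a b. u'!a \<in> Q!b) (length u' - 1) (Suc j) \<or> reach (\<lambda>a b. (u'@[c])!a \<in> Q!b) (length u') j
          \<or> reach (\<lambda>a b. u'!a \<in> Q!b) (length u' - 1) j)"
      using reach_Suc_i[of "\<lambda>a b. (u'@[c])!a \<in> Q!b" "length u' - 1" "Suc j"]
        reach_prefix[OF assms(2), of "[c]" Q "Suc j"] reach_prefix[OF assms(2), of "[c]" Q j] assms(2)
      by simp
    ultimately show ?case using IH e[of j] e[of "Suc j"] Suc(2) by simp
  qed
  show ?thesis unfolding st_def using key by auto
qed

lemma st_append:
  assumes "u \<noteq> []" "u' \<noteq> []" "st F l u = st F l u'"
  shows "st F l (u@w) = st F l (u'@w)"
proof (induction w rule: rev_induct)
  case Nil then show ?case using assms by simp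
next
  case (snoc c w)
  then show ?case using st_snoc[of "u@w" "u'@w" F l c] assms by simp
qed

lemma card_Qs: "finite F \<Longrightarrow> finite (Qs F l) \<and> card (Qs F l) = card F ^ l"
  unfolding Qs_def using finite_lists_length_eq card_lists_length_eq by blast

lemma pump:
  assumes "finite F" "u \<noteq> []"
  shows "\<exists>u'. u' \<noteq> [] \<and> set u' \<subseteq> set u \<and> length u' \<le> 2^(l * card F ^ l) \<and> st F l u' = st F l u"
  using assms(2)
proof (induction "length u" arbitrary: u rule: less_induct)
  case less
  let ?N = "2^(l * card F ^ l) :: nat"
  let ?B = "Pow ({..<l} \<times> Qs F l)"
  have finB: "finite ?B" using card_Qs[OF assms(1)] by simp
  have cardB: "card ?B = ?N" using card_Qs[OF assms(1), of l]
    by (simp add: card_Pow card_cartesian_product)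
  show ?case
  proof (cases "length u \<le> ?N")
    case True then show ?thesis using less by blast
  next
    case False
    let ?f = "\<lambda>k. st F l (take k u)"
    have "\<not> inj_on ?f {1..length u}"
    proof
      assume "inj_on ?f {1..length u}"
      moreover have "?f ` {1..length u} \<subseteq> ?B" unfolding st_def by auto
      ultimately have "card {1..length u} \<le> card ?B" using finB by (rule card_inj_on_le)
      then show False using False cardB by simp
    qed
    then obtain k1 k2 where k: "k1 \<in> {1..length u}" "k2 \<in> {1..length u}" "k1 \<noteq> k2" "?f k1 = ?f k2"
      unfolding inj_on_def by blast
    obtain a b where ab: "a \<in> {1..length u}" "b \<in> {1..length u}" "a < b" "?f a = ?f b"
      using k by (metis linorder_neqE_nat)
    let ?v = "take a u @ drop b u"
    have ne1: "take a u \<noteq> []" "take b u \<noteq> []" using ab less(2) by auto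
    have "st F l ?v = st F l (take b u @ drop b u)"
      using st_append[OF ne1 ab(4)] .
    then have stv: "st F l ?v = st F l u" by simp
    have lv: "length ?v < length u" using ab by auto
    have nev: "?v \<noteq> []" using ne1 by simp
    have sv: "set ?v \<subseteq> set u" using set_take_subset[of a u] set_drop_subset[of b u] by auto
    obtain u' where "u' \<noteq> []" "set u' \<subseteq> set ?v" "length u' \<le> ?N" "st F l u' = st F l ?v"
      using less(1)[OF lv nev] by blast
    then show ?thesis using stv sv by blast
  qed
qed




definition IF :: "'a::linorder set \<Rightarrow> 'a set set" where
  "IF C = (\<lambda>(a,b). {c\<in>C. a \<le> c \<and> c \<le> b}) ` (C \<times> C) \<union> {{}}"

lemma IF_finite_card: "finite C \<Longrightarrow> finite (IF C) \<and> card (IF C) \<le> card C * card C + 1"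
proof -
  assume f: "finite C"
  have "card (IF C) \<le> card ((\<lambda>(a,b). {c\<in>C. a \<le> c \<and> c \<le> b}) ` (C \<times> C)) + card {{}::'a set}"
    unfolding IF_def by (rule card_Un_le)
  also have "\<dots> \<le> card (C \<times> C) + 1" using card_image_le[of "C \<times> C"] f by simp
  finally show ?thesis using f by (simp add: IF_def card_cartesian_product)
qed

lemma interval_in_IF:
  assumes "finite C"
  shows "{c\<in>C. lo \<le> c \<and> c \<le> hi} \<in> IF C"
proof -
  define S where "S = {c\<in>C. lo \<le> c \<and> c \<le> hi}"
  have fS: "finite S" using assms unfolding S_def by simp
  have "S \<in> IF C"
  proof (cases "S = {}")
    case True then show ?thesis unfolding IF_def by simp
  next
    case False
    define m where "m = Min S"
    define M where "M = Max S"
    have a: "m \<in> S" unfolding m_def using fS False by (rule Min_in)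
    have b: "M \<in> S" unfolding M_def using fS False by (rule Max_in)
    have eq: "S = {c\<in>C. m \<le> c \<and> c \<le> M}"
    proof (intro equalityI subsetI)
      fix c assume c: "c \<in> S"
      have "m \<le> c" unfolding m_def using Min_le[OF fS c] .
      moreover have "c \<le> M" unfolding M_def using Max_ge[OF fS c] .
      moreover have "c \<in> C" using c unfolding S_def by blast
      ultimately show "c \<in> {c\<in>C. m \<le> c \<and> c \<le> M}" by blast
    next
      fix c assume c: "c \<in> {c\<in>C. m \<le> c \<and> c \<le> M}"
      have "lo \<le> m" "M \<le> hi" using a b unfolding S_def by blast+
      then show "c \<in> S" using c unfolding S_def by (blast intro: order_trans)
    qed
    have mM: "(m, M) \<in> C \<times> C" using a b unfolding S_def by blast
    have "S = (\<lambda>(a,b). {c\<in>C. a \<le> c \<and> c \<le> b}) (m, M)" using eq by simp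
    then have "S \<in> (\<lambda>(a,b). {c\<in>C. a \<le> c \<and> c \<le> b}) ` (C \<times> C)" using mM by (rule image_eqI)
    then show ?thesis unfolding IF_def by (rule UnI1)
  qed
  then show ?thesis unfolding S_def .
qed

lemma transfer:
  fixes \<kappa> :: "real \<Rightarrow> 'a::linorder"
  assumes fin: "finite C" and steq: "st (IF C) l (map \<kappa> a) = st (IF C) l (map \<kappa> b)"
    and ne: "a \<noteq> []" "b \<noteq> []" and ly: "length y = l" and l1: "l \<ge> 1" and sa: "\<kappa> ` set a \<subseteq> C"
    and H1: "\<And>r v w. 0 \<le> r \<Longrightarrow> \<bar>w - v\<bar> \<le> r \<Longrightarrow> lo r v \<le> \<kappa> w \<and> \<kappa> w \<le> hi r v"
    and H2: "\<And>r v w. 0 \<le> r \<Longrightarrow> lo r v \<le> \<kappa> w \<Longrightarrow> \<kappa> w \<le> hi r v \<Longrightarrow> \<bar>w - v\<bar> \<le> r + g"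
  shows "dF b y \<le> dF a y + g"
proof -
  define r where "r = dF a y"
  have y: "y \<noteq> []" using ly l1 by auto
  have r0: "0 \<le> r" unfolding r_def using dF_nonneg ne y by auto
  define Q where "Q = map (\<lambda>v. {c\<in>C. lo r v \<le> c \<and> c \<le> hi r v}) y"
  have QQ: "Q \<in> Qs (IF C) l" unfolding Qs_def Q_def using interval_in_IF[OF fin] ly by auto
  have ry: "reach (\<lambda>i j. \<bar>a!i - y!j\<bar> \<le> r) (length a - 1) (l - 1)"
    using dF_le_iff[OF ne(1) y, of r] r_def ly by simp
  have "reach (\<lambda>i j. map \<kappa> a ! i \<in> Q!j) (length a - 1) (l - 1)"
  proof (rule reach_mono[OF ry])
    fix i j assume ij: "i \<le> length a - 1" "j \<le> l - 1" "\<bar>a!i - y!j\<bar> \<le> r"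
    have i: "i < length a" using ij ne by (cases a) auto
    have j: "j < l" using ij l1 by auto
    have "\<kappa> (a!i) \<in> C" using sa i by auto
    moreover have "Q!j = {c\<in>C. lo r (y!j) \<le> c \<and> c \<le> hi r (y!j)}" using j ly by (simp add: Q_def)
    ultimately show "map \<kappa> a ! i \<in> Q!j" using i H1[OF r0 ij(3)] by simp
  qed
  then have "(l-1, Q) \<in> st (IF C) l (map \<kappa> a)" unfolding st_def using QQ l1 by simp
  then have "(l-1, Q) \<in> st (IF C) l (map \<kappa> b)" using steq by simp
  then have rb: "reach (\<lambda>i j. map \<kappa> b ! i \<in> Q!j) (length b - 1) (l - 1)" unfolding st_def by simp
  have "reach (\<lambda>i j. \<bar>b!i - y!j\<bar> \<le> r + g) (length b - 1) (l - 1)"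
  proof (rule reach_mono[OF rb])
    fix i j assume ij: "i \<le> length b - 1" "j \<le> l - 1" "map \<kappa> b ! i \<in> Q!j"
    have i: "i < length b" using ij ne by (cases b) auto
    have j: "j < l" using ij l1 by auto
    have "Q!j = {c\<in>C. lo r (y!j) \<le> c \<and> c \<le> hi r (y!j)}" using j ly by (simp add: Q_def)
    then have "lo r (y!j) \<le> \<kappa> (b!i) \<and> \<kappa> (b!i) \<le> hi r (y!j)" using ij(3) i by simp
    then show "\<bar>b!i - y!j\<bar> \<le> r + g" using H2[OF r0] by blast
  qed
  then have "dF b y \<le> r + g" using dF_le_iff[OF ne(2) y, of "r+g"] ly by simp
  then show ?thesis unfolding r_def .
qed

lemma core:
  fixes \<kappa> :: "real \<Rightarrow> 'a::linorder" and \<sigma> :: "'a \<Rightarrow> real"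
  assumes fin: "finite C" and sx: "\<kappa> ` set x \<subseteq> C" and ne: "x \<noteq> []" and l1: "l \<ge> 1"
    and sec: "\<And>k. k \<in> C \<Longrightarrow> \<kappa> (\<sigma> k) = k"
    and H1: "\<And>r v w. 0 \<le> r \<Longrightarrow> \<bar>w - v\<bar> \<le> r \<Longrightarrow> lo r v \<le> \<kappa> w \<and> \<kappa> w \<le> hi r v"
    and H2: "\<And>r v w. 0 \<le> r \<Longrightarrow> lo r v \<le> \<kappa> w \<Longrightarrow> \<kappa> w \<le> hi r v \<Longrightarrow> \<bar>w - v\<bar> \<le> r + g"
  shows "\<exists>x'. x' \<noteq> [] \<and> length x' \<le> 2^(l * (card C * card C + 1)^l) \<and>
     (\<forall>y. length y = l \<longrightarrow> dF x' y \<le> dF x y + g \<and> dF x y \<le> dF x' y + g)"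
proof -
  have fI: "finite (IF C)" and cI: "card (IF C) \<le> card C * card C + 1" using IF_finite_card[OF fin] by auto
  obtain u' where u': "u' \<noteq> []" "set u' \<subseteq> set (map \<kappa> x)" "length u' \<le> 2^(l * card (IF C) ^ l)"
      "st (IF C) l u' = st (IF C) l (map \<kappa> x)"
    using pump[OF fI, of "map \<kappa> x" l] ne by auto
  define x' where "x' = map \<sigma> u'"
  have su: "set u' \<subseteq> C" using u'(2) sx by auto
  have mk: "map \<kappa> x' = u'" unfolding x'_def map_map
    by (rule map_idI) (use su sec in auto)
  have sx': "\<kappa> ` set x' \<subseteq> C" using mk su by (metis set_map)
  have ne': "x' \<noteq> []" using u'(1) x'_def by simp
  have "length x' \<le> 2^(l * card (IF C) ^ l)" using u'(3) x'_def by simp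
  also have "\<dots> \<le> 2^(l * (card C * card C + 1)^l)"
  proof (rule power_increasing)
    show "l * card (IF C) ^ l \<le> l * (card C * card C + 1)^l"
      using cI by (intro mult_le_mono1 mult_le_mono2 power_mono) auto
  qed simp
  finally have len: "length x' \<le> 2^(l * (card C * card C + 1)^l)" .
  have st: "st (IF C) l (map \<kappa> x) = st (IF C) l (map \<kappa> x')" using mk u'(4) by simp
  have d1: "dF x' y \<le> dF x y + g" if ly: "length y = l" for y
    using transfer[of C l \<kappa> x x' y lo hi g] fin st ne ne' ly l1 sx H1 H2 by blast
  have d2: "dF x y \<le> dF x' y + g" if ly: "length y = l" for y
    using transfer[of C l \<kappa> x' x y lo hi g] fin st ne ne' ly l1 sx' H1 H2 by simp
  show ?thesis using d1 d2 ne' len by blast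
qed




lemma floor_H2:
  fixes g a b w :: real
  assumes g: "g > 0" and h1: "\<lfloor>a/g\<rfloor> \<le> \<lfloor>w/g\<rfloor>" and h2: "\<lfloor>w/g\<rfloor> \<le> \<lfloor>b/g\<rfloor>"
  shows "a - g < w \<and> w < b + g"
proof -
  have "a/g < of_int \<lfloor>a/g\<rfloor> + 1" by linarith
  also have "\<dots> \<le> of_int \<lfloor>w/g\<rfloor> + 1" using h1 by simp
  also have "\<dots> \<le> w/g + 1" by linarith
  finally have 1: "a/g < w/g + 1" .
  have "w/g < of_int \<lfloor>w/g\<rfloor> + 1" by linarith
  also have "\<dots> \<le> of_int \<lfloor>b/g\<rfloor> + 1" using h2 by simp
  also have "\<dots> \<le> b/g + 1" by linarith
  finally have 2: "w/g < b/g + 1" .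
  from 1 have "a < w + g" using g by (simp add: field_simps)
  moreover from 2 have "w < b + g" using g by (simp add: field_simps)
  ultimately show ?thesis by simp
qed

lemma floor_card:
  fixes A B :: real
  assumes "B \<le> A"
  shows "real (nat (\<lfloor>A\<rfloor> - \<lfloor>B\<rfloor> + 1)) \<le> A - B + 2"
proof -
  have "real_of_int (\<lfloor>A\<rfloor> - \<lfloor>B\<rfloor> + 1) \<le> A - B + 2" by linarith
  moreover have "0 \<le> A - B + 2" using assms by simp
  ultimately show ?thesis by (cases "\<lfloor>A\<rfloor> - \<lfloor>B\<rfloor> + 1 \<ge> 0") auto
qed

lemma bound:
  assumes m: "real m \<le> 10 * real l / \<epsilon>" and e: "0 < \<epsilon>" "\<epsilon> < 1" and l: "l \<ge> 1"
    and n: "n \<le> 2^(l*(m*m+1)^l)"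
  shows "real n \<le> 2 powr ((11 * real l / \<epsilon>)^(2*l+2))"
proof -
  define s where "s = real l / \<epsilon>"
  define t where "t = 11 * real l / \<epsilon>"
  have ts: "t = 11 * s" unfolding t_def s_def by simp
  have s1: "1 \<le> s" unfolding s_def using e l by (simp add: field_simps)
  have ls: "real l \<le> s" unfolding s_def using e l by (simp add: field_simps)
  have m0: "0 \<le> real m" by simp
  have ms: "real m \<le> 10 * s" using m unfolding s_def by simp
  have "real m * real m \<le> (10 * s) * (10 * s)" using ms m0 by (intro mult_mono) auto
  have A: "real (m*m+1) \<le> t^2"
  proof -
    have "real (m*m+1) = real m * real m + 1" by simp
    also have "\<dots> \<le> 100 * (s*s) + 1" using \<open>real m * real m \<le> (10 * s) * (10 * s)\<close> by simp
    also have "\<dots> \<le> 121 * (s*s)" using mult_mono[OF s1 s1] s1 by simp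
    also have "\<dots> = t^2" unfolding ts power2_eq_square by simp
    finally show ?thesis .
  qed
  have B: "real l \<le> t^2"
  proof -
    have "s * 1 \<le> s * s" using s1 by (intro mult_left_mono) auto
    then show ?thesis using ls unfolding ts power2_eq_square by simp
  qed
  have "real (l*(m*m+1)^l) = real l * real (m*m+1) ^ l" by simp
  also have "\<dots> \<le> t^2 * (t^2)^l" using A B by (intro mult_mono power_mono) auto
  also have "\<dots> = t^(2*l+2)"
    by (metis add.commute mult.commute power_add power_mult)
  finally have C: "real (l*(m*m+1)^l) \<le> t^(2*l+2)" .
  have "real n \<le> real ((2::nat)^(l*(m*m+1)^l))" using n by linarith
  also have "\<dots> = 2 powr real (l*(m*m+1)^l)"
    by (subst powr_realpow) auto
  also have "\<dots> \<le> 2 powr (t^(2*l+2))" using C by (intro powr_mono) auto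
  finally show ?thesis unfolding t_def .
qed


lemma cover:
  assumes "x \<noteq> []" "length y = l" "l \<ge> 1" "v \<in> set x"
  shows "\<exists>j<l. \<bar>v - y!j\<bar> \<le> dF x y"
proof -
  have y: "y \<noteq> []" using assms by auto
  have r: "reach (\<lambda>i j. \<bar>x!i - y!j\<bar> \<le> dF x y) (length x - 1) (length y - 1)"
    using dF_le_iff[OF assms(1) y, of "dF x y"] by simp
  obtain i where i: "i < length x" "v = x!i" using assms(4) by (auto simp: in_set_conv_nth)
  obtain j where "j \<le> length y - 1" "\<bar>x!i - y!j\<bar> \<le> dF x y"
    using reach_cover[OF r, of i] i by fastforce
  then show ?thesis using i assms(2,3) by (intro exI[of _ j]) auto
qed

lemma caseA:
  assumes "x \<noteq> []" "l \<ge> 1"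
  shows "\<exists>x'. x' \<noteq> [] \<and> length x' \<le> 2^(l * (card (set x) * card (set x) + 1)^l) \<and>
     (\<forall>y. length y = l \<longrightarrow> dF x' y \<le> dF x y + 0 \<and> dF x y \<le> dF x' y + 0)"
proof (rule core[where \<kappa>="\<lambda>v. v" and \<sigma>="\<lambda>v. v" and lo="\<lambda>r v. v - r" and hi="\<lambda>r v. v + r"])
  show "finite (set x)" by simp
  show "(\<lambda>v. v) ` set x \<subseteq> set x" by simp
qed (use assms in \<open>auto simp: abs_le_iff\<close>)


lemma caseB:
  assumes e: "0 < \<epsilon>" "\<epsilon> < 1" and l: "l \<ge> 1" and ne: "x \<noteq> []" and big: "card (set x) > l"
  shows "\<exists>x' g. x' \<noteq> [] \<and> real (length x') \<le> 2 powr ((11 * real l / \<epsilon>)^(2*l+2)) \<and>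
     (\<forall>y. length y = l \<longrightarrow> dF x' y \<le> dF x y + g \<and> dF x y \<le> dF x' y + g \<and> g \<le> \<epsilon> * dF x y)"
proof -
  define P where "P = {p \<in> set x \<times> set x. fst p \<noteq> snd p}"
  have finP: "finite P" unfolding P_def by (rule finite_subset[of _ "set x \<times> set x"]) auto
  have "\<not> (\<forall>v\<in>set x. \<forall>w\<in>set x. v = w)"
  proof
    assume all: "\<forall>v\<in>set x. \<forall>w\<in>set x. v = w"
    have "hd x \<in> set x" using ne by simp
    then have "set x \<subseteq> {hd x}" using all by auto
    then have "card (set x) \<le> card {hd x}" by (intro card_mono) auto
    then show False using big l by simp
  qed
  then obtain v0 w0 where vw: "v0 \<in> set x" "w0 \<in> set x" "v0 \<noteq> w0" by blast
  define \<delta> where "\<delta> = Min ((\<lambda>p. \<bar>fst p - snd p\<bar>) ` P)"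
  have Pne: "(v0,w0) \<in> P" unfolding P_def using vw by simp
  have "\<delta> \<in> (\<lambda>p. \<bar>fst p - snd p\<bar>) ` P" unfolding \<delta>_def using finP Pne by (intro Min_in) auto
  then have \<delta>pos: "\<delta> > 0" unfolding P_def by auto
  have \<delta>le: "\<delta> \<le> \<bar>v - w\<bar>" if "v \<in> set x" "w \<in> set x" "v \<noteq> w" for v w
  proof -
    have "(v,w) \<in> P" unfolding P_def using that by simp
    then show ?thesis unfolding \<delta>_def using finP by (intro Min_le) force+
  qed
  have low: "\<delta>/2 \<le> dF x y" if ly: "length y = l" for y
  proof (rule ccontr)
    assume "\<not> \<delta>/2 \<le> dF x y"
    then have rl: "dF x y < \<delta>/2" by simp
    define h where "h v = (SOME j. j < l \<and> \<bar>v - y!j\<bar> \<le> dF x y)" for v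
    have hv: "h v < l \<and> \<bar>v - y!(h v)\<bar> \<le> dF x y" if "v \<in> set x" for v
      unfolding h_def using cover[OF ne ly l that] by (rule someI_ex)
    have "inj_on h (set x)"
    proof (rule inj_onI)
      fix v w assume vw: "v \<in> set x" "w \<in> set x" "h v = h w"
      show "v = w"
      proof (rule ccontr)
        assume "v \<noteq> w"
        then have "\<delta> \<le> \<bar>v - w\<bar>" using \<delta>le vw by simp
        moreover have "\<bar>v - w\<bar> \<le> 2 * dF x y" using hv[OF vw(1)] hv[OF vw(2)] vw(3) by (simp add: abs_le_iff)
        ultimately show False using rl by linarith
      qed
    qed
    moreover have "h ` set x \<subseteq> {..<l}" using hv by auto
    ultimately have "card (set x) \<le> card {..<l}" by (intro card_inj_on_le) auto
    then show False using big by simp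
  qed
  define Y where "Y = (\<lambda>y. dF x y) ` {y. length y = l}"
  have Yne: "Y \<noteq> {}" unfolding Y_def by (auto intro: exI[of _ "replicate l 0"])
  have bddY: "bdd_below Y" unfolding Y_def bdd_below_def using low by blast
  define D where "D = Inf Y"
  have Dlow: "\<delta>/2 \<le> D" unfolding D_def Y_def using Yne low by (intro cInf_greatest) (auto simp: Y_def)
  have Dpos: "D > 0" using Dlow \<delta>pos by linarith
  have Dle: "D \<le> dF x y" if "length y = l" for y
    unfolding D_def using that bddY by (intro cInf_lower) (auto simp: Y_def)
  obtain ys where ys: "length ys = l" "dF x ys < 2*D"
  proof -
    have "Inf Y < 2*D" using Dpos unfolding D_def by simp
    from cInf_lessD[OF Yne this] show ?thesis using that unfolding Y_def by auto
  qed
  define g where "g = \<epsilon> * D / 2"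
  have gpos: "g > 0" unfolding g_def using e Dpos by simp
  define \<kappa> where "\<kappa> = (\<lambda>v::real. \<lfloor>v/g\<rfloor>)"
  define C where "C = \<kappa> ` set x"
  have finC: "finite C" unfolding C_def by simp
  have subC: "\<kappa> ` set x \<subseteq> C" unfolding C_def by simp
  have H1: "\<lfloor>(v-r)/g\<rfloor> \<le> \<kappa> w \<and> \<kappa> w \<le> \<lfloor>(v+r)/g\<rfloor>" if "0 \<le> r" "\<bar>w - v\<bar> \<le> r" for r v w
  proof -
    have "(v-r)/g \<le> w/g" "w/g \<le> (v+r)/g" using that gpos by (auto intro!: divide_right_mono)
    then show ?thesis unfolding \<kappa>_def by (auto intro: floor_mono)
  qed
  have H2: "\<bar>w - v\<bar> \<le> r + g" if "0 \<le> r" "\<lfloor>(v-r)/g\<rfloor> \<le> \<kappa> w" "\<kappa> w \<le> \<lfloor>(v+r)/g\<rfloor>" for r v w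
  proof -
    have "(v-r) - g < w \<and> w < (v+r) + g" using floor_H2[OF gpos, of "v-r" w "v+r"] that unfolding \<kappa>_def by blast
    then show ?thesis by (auto simp: abs_le_iff)
  qed
  have sec: "\<kappa> (of_int k * g) = k" if "k \<in> C" for k
    unfolding \<kappa>_def using gpos by simp
  have "\<exists>x'. x' \<noteq> [] \<and> length x' \<le> 2^(l * (card C * card C + 1)^l) \<and>
    (\<forall>y. length y = l \<longrightarrow> dF x' y \<le> dF x y + g \<and> dF x y \<le> dF x' y + g)"
    by (rule core[OF finC subC ne l sec H1 H2])
  then obtain x' where x'0: "x' \<noteq> [] \<and> length x' \<le> 2^(l * (card C * card C + 1)^l) \<and>
    (\<forall>y. length y = l \<longrightarrow> dF x' y \<le> dF x y + g \<and> dF x y \<le> dF x' y + g)" by (rule exE)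
  note x' = conjunct1[OF x'0] conjunct1[OF conjunct2[OF x'0]] conjunct2[OF conjunct2[OF x'0]]
  define I where "I j = {\<lfloor>(ys!j - 2*D)/g\<rfloor>..\<lfloor>(ys!j + 2*D)/g\<rfloor>}" for j
  have Csub: "C \<subseteq> (\<Union>j\<in>{..<l}. I j)"
  proof
    fix c assume "c \<in> C"
    then obtain v where v: "v \<in> set x" "c = \<kappa> v" unfolding C_def by auto
    obtain j where j: "j < l" "\<bar>v - ys!j\<bar> \<le> dF x ys" using cover[OF ne ys(1) l v(1)] by auto
    have "\<bar>v - ys!j\<bar> \<le> 2*D" using j ys by simp
    then have "c \<in> I j" using H1[of "2*D" v "ys!j"] Dpos v unfolding I_def by auto
    then show "c \<in> (\<Union>j\<in>{..<l}. I j)" using j by auto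
  qed
  have "card C \<le> card (\<Union>j\<in>{..<l}. I j)" using Csub by (intro card_mono) (auto simp: I_def)
  also have "\<dots> \<le> (\<Sum>j<l. card (I j))" by (rule card_UN_le) simp
  finally have cC: "real (card C) \<le> (\<Sum>j<l. real (card (I j)))" by (metis of_nat_le_iff of_nat_sum)
  have cI: "real (card (I j)) \<le> 8/\<epsilon> + 2" for j
  proof -
    have eq: "(ys!j + 2*D)/g - (ys!j - 2*D)/g = 8/\<epsilon>"
      unfolding g_def using Dpos e by (simp add: field_simps)
    have "0 < 8/\<epsilon>" using e by simp
    then have "(ys!j - 2*D)/g \<le> (ys!j + 2*D)/g" using eq by linarith
    from floor_card[OF this] have "real (nat (\<lfloor>(ys!j + 2*D)/g\<rfloor> - \<lfloor>(ys!j - 2*D)/g\<rfloor> + 1)) \<le> 8/\<epsilon> + 2"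
      unfolding eq .
    then show ?thesis unfolding I_def card_atLeastAtMost_int .
  qed
  have "real (card C) \<le> (\<Sum>j<l. 8/\<epsilon> + 2)" using cC cI by (meson order_trans sum_mono)
  also have "\<dots> = real l * (8/\<epsilon> + 2)" by simp
  also have "\<dots> \<le> 10 * real l / \<epsilon>"
  proof -
    have "2 \<le> 2/\<epsilon>" using e by (simp add: field_simps)
    then have "8/\<epsilon> + 2 \<le> 10/\<epsilon>" by simp
    then have "real l * (8/\<epsilon> + 2) \<le> real l * (10/\<epsilon>)" by (rule mult_left_mono) simp
    then show ?thesis by simp
  qed
  finally have cardC: "real (card C) \<le> 10 * real l / \<epsilon>" .
  have len: "real (length x') \<le> 2 powr ((11 * real l / \<epsilon>)^(2*l+2))"
    by (rule bound[OF cardC e l x'(2)])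
  have gle: "g \<le> \<epsilon> * dF x y" if "length y = l" for y
  proof -
    have "g \<le> \<epsilon> * D" unfolding g_def using e Dpos by simp
    also have "\<dots> \<le> \<epsilon> * dF x y" using Dle[OF that] e by simp
    finally show ?thesis .
  qed
  show ?thesis using x'(1,3) len gle by blast
qed


theorem corollary9p12:
  "\<exists>C1 C2 :: real. C1 > 0 \<and> C2 > 0 \<and>
    (\<forall>(\<epsilon>::real) (l::nat) (x::real list).
       0 < \<epsilon> \<and> \<epsilon> < 1 \<and> l \<ge> 1 \<and> length x \<ge> 1 \<longrightarrow>
       (\<exists>x'::real list. length x' \<ge> 1 \<and>
          real (length x') \<le> C1 * 2 powr ((C2 * real l / \<epsilon>) ^ (2 * l + 2)) \<and>
          (\<forall>y::real list. length y = l \<longrightarrow>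
             (1 - \<epsilon>) * dF x y \<le> dF x' y \<and> dF x' y \<le> (1 + \<epsilon>) * dF x y)))"
proof (rule exI[of _ "1::real"], rule exI[of _ "11::real"], intro conjI allI impI)
  show "(0::real) < 1" by simp
  show "(0::real) < 11" by simp
  fix \<epsilon> :: real and l :: nat and x :: "real list"
  assume h: "0 < \<epsilon> \<and> \<epsilon> < 1 \<and> l \<ge> 1 \<and> length x \<ge> 1"
  then have e: "0 < \<epsilon>" "\<epsilon> < 1" and l: "l \<ge> 1" and ne: "x \<noteq> []" by auto
  have "\<exists>x' g. x' \<noteq> [] \<and> real (length x') \<le> 2 powr ((11 * real l / \<epsilon>)^(2*l+2)) \<and>
     (\<forall>y. length y = l \<longrightarrow> dF x' y \<le> dF x y + g \<and> dF x y \<le> dF x' y + g \<and> g \<le> \<epsilon> * dF x y)"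
  proof (cases "card (set x) \<le> l")
    case True
    have "\<exists>x'. x' \<noteq> [] \<and> length x' \<le> 2^(l * (card (set x) * card (set x) + 1)^l) \<and>
      (\<forall>y. length y = l \<longrightarrow> dF x' y \<le> dF x y + 0 \<and> dF x y \<le> dF x' y + 0)"
      by (rule caseA[OF ne l])
    then obtain x' where x'0: "x' \<noteq> [] \<and> length x' \<le> 2^(l * (card (set x) * card (set x) + 1)^l) \<and>
      (\<forall>y. length y = l \<longrightarrow> dF x' y \<le> dF x y + 0 \<and> dF x y \<le> dF x' y + 0)" by (rule exE)
    have cm: "real (card (set x)) \<le> 10 * real l / \<epsilon>"
    proof -
      have "real (card (set x)) \<le> real l" using True by simp
      also have "\<dots> \<le> real l / \<epsilon>" using e mult_right_mono[of \<epsilon> 1 "real l"] by (simp add: field_simps)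
      also have "\<dots> \<le> 10 * real l / \<epsilon>" using e by (simp add: field_simps)
      finally show ?thesis .
    qed
    have len: "real (length x') \<le> 2 powr ((11 * real l / \<epsilon>)^(2*l+2))"
      using bound[OF cm e l] x'0 by blast
    have "\<forall>y. length y = l \<longrightarrow> dF x' y \<le> dF x y + 0 \<and> dF x y \<le> dF x' y + 0 \<and> 0 \<le> \<epsilon> * dF x y"
    proof (intro allI impI)
      fix y :: "real list" assume ly: "length y = l"
      have "y \<noteq> []" using ly l by auto
      then have "0 \<le> dF x y" using dF_nonneg[OF ne] by blast
      then show "dF x' y \<le> dF x y + 0 \<and> dF x y \<le> dF x' y + 0 \<and> 0 \<le> \<epsilon> * dF x y"
        using x'0 ly e by simp
    qed
    then show ?thesis using x'0 len by blast
  next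
    case False
    then show ?thesis using caseB[OF e l ne] by simp
  qed
  then obtain x' g where x': "x' \<noteq> []" "real (length x') \<le> 2 powr ((11 * real l / \<epsilon>)^(2*l+2))"
    "\<forall>y. length y = l \<longrightarrow> dF x' y \<le> dF x y + g \<and> dF x y \<le> dF x' y + g \<and> g \<le> \<epsilon> * dF x y"
    by blast
  show "\<exists>x'::real list. length x' \<ge> 1 \<and>
          real (length x') \<le> 1 * 2 powr ((11 * real l / \<epsilon>) ^ (2 * l + 2)) \<and>
          (\<forall>y::real list. length y = l \<longrightarrow>
             (1 - \<epsilon>) * dF x y \<le> dF x' y \<and> dF x' y \<le> (1 + \<epsilon>) * dF x y)"
  proof (intro exI[of _ x'] conjI allI impI)
    show "length x' \<ge> 1" using x'(1) by (cases x') auto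
    show "real (length x') \<le> 1 * 2 powr ((11 * real l / \<epsilon>) ^ (2 * l + 2))" using x'(2) by simp
    fix y :: "real list" assume ly: "length y = l"
    have a: "dF x' y \<le> dF x y + g" and b: "dF x y \<le> dF x' y + g" and c: "g \<le> \<epsilon> * dF x y"
      using x'(3) ly by auto
    show "(1 - \<epsilon>) * dF x y \<le> dF x' y" using b c by (simp add: algebra_simps)
    show "dF x' y \<le> (1 + \<epsilon>) * dF x y" using a c by (simp add: algebra_simps)
  qed
qed

end
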